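(* For every integer $k\ge1$, the vector $(1,3,k,1)$ is not realizable.
   Context: All graphs are finite, nonempty, and reflexive (every vertex has a loop). $N[v]$ is the closed neighborhood of $v$ (including $v$). For distinct $v,w$, $w$ strictly corners $v$ if $N[v]\subsetneq N[w]$; $v$ is then a strict corner. Corner ranking: set $G^{(1)}=G$, $k=1$. If $G^{(k)}$ is a clique, give all its vertices rank $k$ and stop. Else if $G^{(k)}$ has no strict corners, give all its vertices rank $\infty$ and stop. Else give every strict corner of $G^{(k)}$ rank $k$, delete them to get $G^{(k+1)}$ (induced subgraph), increase $k$ and repeat. The corner rank is the largest rank of a vertex; $X_k$ is the set of rank-$k$ vertices; cop-win graphs are exactly those of finite corner rank. The rank cardinality vector of a graph of corner rank $\alpha$ is $(x_\alpha,\dots,x_1)$ with $x_k=|X_k|$; a vector (finite list of positive integers) is realizable if it is the rank cardinality vector of some cop-win graph. *)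

theory Defs
  imports Main
begin

text \<open>A finite, nonempty, reflexive (undirected) graph on vertex set V with
  adjacency relation E (only its restriction to V matters).\<close>
definition reflexive_graph :: "('a \<Rightarrow> 'a \<Rightarrow> bool) \<Rightarrow> 'a set \<Rightarrow> bool" where
  "reflexive_graph E V \<longleftrightarrow> finite V \<and> V \<noteq> {} \<and> (\<forall>v\<in>V. E v v)
     \<and> (\<forall>u\<in>V. \<forall>v\<in>V. E u v \<longrightarrow> E v u)"

definition cnbhd :: "('a \<Rightarrow> 'a \<Rightarrow> bool) \<Rightarrow> 'a set \<Rightarrow> 'a \<Rightarrow> 'a set" where
  "cnbhd E S v = {u \<in> S. E v u}"

definition is_clique :: "('a \<Rightarrow> 'a \<Rightarrow> bool) \<Rightarrow> 'a set \<Rightarrow> bool" where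
  "is_clique E S \<longleftrightarrow> (\<forall>u\<in>S. \<forall>v\<in>S. E u v)"

definition strict_corners :: "('a \<Rightarrow> 'a \<Rightarrow> bool) \<Rightarrow> 'a set \<Rightarrow> 'a set" where
  "strict_corners E S = {v \<in> S. \<exists>w\<in>S. w \<noteq> v \<and> cnbhd E S v \<subset> cnbhd E S w}"

text \<open>Vertex set of G^(k+1): remaining vertices after k rounds of corner deletion.\<close>
fun remaining :: "('a \<Rightarrow> 'a \<Rightarrow> bool) \<Rightarrow> 'a set \<Rightarrow> nat \<Rightarrow> 'a set" where
  "remaining E V 0 = V"
| "remaining E V (Suc n) = remaining E V n - strict_corners E (remaining E V n)"

text \<open>Finite corner rank: some G^(k) is a clique (before any stage without strict
  corners, since then the process would stay stuck on a non-clique forever).\<close>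
definition cop_win :: "('a \<Rightarrow> 'a \<Rightarrow> bool) \<Rightarrow> 'a set \<Rightarrow> bool" where
  "cop_win E V \<longleftrightarrow> (\<exists>n. is_clique E (remaining E V n))"

text \<open>Corner rank alpha: G^(alpha) is the first clique, i.e. alpha - 1 = least n.\<close>
definition corner_rank :: "('a \<Rightarrow> 'a \<Rightarrow> bool) \<Rightarrow> 'a set \<Rightarrow> nat" where
  "corner_rank E V = Suc (LEAST n. is_clique E (remaining E V n))"

definition rank_set :: "('a \<Rightarrow> 'a \<Rightarrow> bool) \<Rightarrow> 'a set \<Rightarrow> nat \<Rightarrow> 'a set" where
  "rank_set E V k =
     (if k = corner_rank E V then remaining E V (k - 1)
      else strict_corners E (remaining E V (k - 1)))"

text \<open>Rank cardinality vector (x_alpha, ..., x_1) as a list.\<close>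
definition rank_card_vector :: "('a \<Rightarrow> 'a \<Rightarrow> bool) \<Rightarrow> 'a set \<Rightarrow> nat list" where
  "rank_card_vector E V = map (\<lambda>k. card (rank_set E V k)) (rev [1..<Suc (corner_rank E V)])"

text \<open>Realizable: rank cardinality vector of some cop-win graph. Vertices are taken
  from nat, which is no restriction since every finite graph has an isomorphic copy
  on natural numbers.\<close>
definition realizable :: "nat list \<Rightarrow> bool" where
  "realizable xs \<longleftrightarrow> (\<exists>(V::nat set) E. reflexive_graph E V \<and> cop_win E V
                        \<and> rank_card_vector E V = xs)"

end

theory Submission
  imports Defs
begin

lemma psub_cnbhd:
  "cnbhd E S v \<subset> cnbhd E S w \<longleftrightarrow> (\<forall>t\<in>S. E v t \<longrightarrow> E w t) \<and> (\<exists>t\<in>S. E w t \<and> \<not> E v t)"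
  unfolding cnbhd_def by auto

lemma sc_iff:
  "v \<in> strict_corners E S \<longleftrightarrow> v \<in> S \<and> (\<exists>w\<in>S. w \<noteq> v \<and> (\<forall>t\<in>S. E v t \<longrightarrow> E w t) \<and> (\<exists>t\<in>S. E w t \<and> \<not> E v t))"
  unfolding strict_corners_def psub_cnbhd by auto

lemma four:
  assumes d: "a\<noteq>b" "a\<noteq>c" "a\<noteq>z" "b\<noteq>c" "b\<noteq>z" "c\<noteq>z"
  and r: "E a a" "E b b" "E c c" "E z z"
  and s: "E b a = E a b" "E c a = E a c" "E z a = E a z" "E c b = E b c" "E z b = E b z" "E z c = E c z"
  and sc: "strict_corners E {a,b,c,z} = {a,b,c}"
  shows "E z a \<and> E z b \<and> E z c \<and> ((\<not>E a b \<and> \<not>E a c) \<or> (\<not>E b a \<and> \<not>E b c) \<or> (\<not>E c a \<and> \<not>E c b))"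
proof -
  have A: "a \<in> strict_corners E {a,b,c,z}" "b \<in> strict_corners E {a,b,c,z}"
    "c \<in> strict_corners E {a,b,c,z}" "z \<notin> strict_corners E {a,b,c,z}"
    using sc d by auto
  show ?thesis using A d r
    by (cases "E a b"; cases "E a c"; cases "E a z"; cases "E b c"; cases "E b z"; cases "E c z"; simp add: sc_iff s)
qed

lemma core:
  assumes sym: "\<forall>x\<in>V. \<forall>y\<in>V. E x y \<longrightarrow> E y x"
  and refl: "\<forall>v\<in>V. E v v"
  and SCV: "strict_corners E V = {u}"
  and G2: "G2 = V - {u}"
  and Tdef: "T = G2 - strict_corners E G2"
  and TT: "T = {a,b,c,z}"
  and e: "E z a" "E z b" "E z c" "\<not> E c a" "\<not> E c b"
  shows False
proof -
  define X where "X = strict_corners E G2"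
  have XG: "X \<subseteq> G2" unfolding X_def strict_corners_def by auto
  have uV: "u \<in> V" using SCV unfolding strict_corners_def by auto
  have VI: "V = insert u G2" using G2 uV by auto
  have GV: "G2 \<subseteq> V" using G2 by auto
  have TG: "T \<subseteq> G2" using Tdef by auto
  have inT: "a \<in> T" "b \<in> T" "c \<in> T" "z \<in> T" using TT by auto
  have inG: "a \<in> G2" "b \<in> G2" "c \<in> G2" "z \<in> G2" using inT TG by auto
  have uG: "u \<notin> G2" using G2 by auto
  have GXT: "\<And>t. t \<in> G2 \<Longrightarrow> t \<notin> T \<Longrightarrow> t \<in> X" using Tdef X_def by auto
  have XnT: "\<And>t. t \<in> X \<Longrightarrow> t \<notin> T" using Tdef X_def by auto
  have symG: "\<And>x y. x \<in> G2 \<Longrightarrow> y \<in> G2 \<Longrightarrow> E x y \<Longrightarrow> E y x" using sym GV by blast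
  have zall: "\<And>t. t \<in> T \<Longrightarrow> E z t"
    using TT e refl inG GV by auto
  have xnot: "\<And>x. x \<in> G2 \<Longrightarrow> x \<notin> strict_corners E V" using SCV uG by auto
  have Xu: "E x u" if xX: "x \<in> X" for x
  proof (rule ccontr)
    assume nu: "\<not> E x u"
    have xG: "x \<in> G2" using xX XG by auto
    obtain w where w: "w \<in> G2" "w \<noteq> x" "\<forall>t\<in>G2. E x t \<longrightarrow> E w t" "\<exists>t\<in>G2. E w t \<and> \<not> E x t"
      using xX unfolding X_def sc_iff by blast
    have "x \<in> strict_corners E V" unfolding sc_iff VI using w xG nu by auto
    then show False using xnot xG by simp
  qed
  have dom: "\<exists>w\<in>T. (\<forall>t\<in>G2. E x t \<longrightarrow> E w t) \<and> \<not> E w u" if xX: "x \<in> X" for x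
  proof -
    have xG: "x \<in> G2" using xX XG by auto
    obtain w where w: "w \<in> G2" "w \<noteq> x" "\<forall>t\<in>G2. E x t \<longrightarrow> E w t" "\<exists>t\<in>G2. E w t \<and> \<not> E x t"
      using xX unfolding X_def sc_iff by blast
    have xu: "E x u" using Xu xX by blast
    have wu: "\<not> E w u"
    proof
      assume "E w u"
      then have "x \<in> strict_corners E V" unfolding sc_iff VI using w xG xu by auto
      then show False using xnot xG by simp
    qed
    have "w \<notin> X" using Xu wu by blast
    then have "w \<in> T" using w(1) Tdef X_def by auto
    then show ?thesis using wu w(3) by blast
  qed
  have ac: "\<not> E a c" using symG inG e by blast
  have bc: "\<not> E b c" using symG inG e by blast
  have cnotSC: "c \<notin> X" "a \<notin> X" using XnT inT by auto
  obtain xc where xc: "xc \<in> X" "E c xc" "\<not> E z xc"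
  proof -
    have "\<not> (\<forall>t\<in>G2. E c t \<longrightarrow> E z t)"
    proof
      assume "\<forall>t\<in>G2. E c t \<longrightarrow> E z t"
      then have "c \<in> X" unfolding X_def sc_iff using inG e refl GV
        by (metis (no_types, lifting))
      then show False using cnotSC by simp
    qed
    then obtain t where "t \<in> G2" "E c t" "\<not> E z t" by blast
    moreover have "t \<notin> T" using zall calculation by blast
    ultimately show ?thesis using that GXT by blast
  qed
  obtain xa where xa: "xa \<in> X" "E a xa" "\<not> E z xa"
  proof -
    have "\<not> (\<forall>t\<in>G2. E a t \<longrightarrow> E z t)"
    proof
      assume "\<forall>t\<in>G2. E a t \<longrightarrow> E z t"
      then have "a \<in> X" unfolding X_def sc_iff using inG e ac refl GV
        by (metis (no_types, lifting))
      then show False using cnotSC by simp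
    qed
    then obtain t where "t \<in> G2" "E a t" "\<not> E z t" by blast
    moreover have "t \<notin> T" using zall calculation by blast
    ultimately show ?thesis using that GXT by blast
  qed
  obtain y where y: "y \<in> V" "y \<noteq> u" "\<forall>t\<in>V. E u t \<longrightarrow> E y t"
  proof -
    have "u \<in> strict_corners E V" using SCV by simp
    then show ?thesis using that unfolding sc_iff by blast
  qed
  have yG: "y \<in> G2" using y G2 by auto
  have yu: "E y u" using y uV refl by blast
  have yX: "E y x" if "x \<in> X" for x
  proof -
    have "x \<in> V" using that XG GV by auto
    then show ?thesis using Xu[OF that] sym uV y by blast
  qed
  have xcG: "xc \<in> G2" "xa \<in> G2" using xc xa XG by auto
  obtain wc where wc: "wc \<in> T" "\<forall>t\<in>G2. E xc t \<longrightarrow> E wc t" "\<not> E wc u"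
    using dom xc(1) by blast
  have "E wc c" using wc(2) xc(2) symG inG xcG by blast
  moreover have "E wc xc" using wc(2) xcG refl GV by blast
  ultimately have wcc: "wc = c" using wc(1) TT e ac bc xc(3) by auto
  have cy: "E c y" using wc(2) wcc yX[OF xc(1)] symG yG xcG by blast
  have "y \<notin> T" using TT cy e yX[OF xc(1)] xc(3) wc(3) wcc yu by auto
  then have yX2: "y \<in> X" using GXT yG by blast
  obtain wy where wy: "wy \<in> T" "\<forall>t\<in>G2. E y t \<longrightarrow> E wy t"
    using dom yX2 by blast
  have "E wy xc" using wy yX[OF xc(1)] xcG by blast
  moreover have "E c wy" using calculation wc(2) wcc symG xcG wy(1) TG by blast
  ultimately have wyc: "wy = c" using wy(1) TT e xc(3) by auto
  have cxa: "E c xa" using wy(2) wyc yX[OF xa(1)] xcG by blast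
  obtain wa where wa: "wa \<in> T" "\<forall>t\<in>G2. E xa t \<longrightarrow> E wa t"
    using dom xa(1) by blast
  have "E wa a" using wa(2) xa(2) symG inG xcG by blast
  moreover have "E wa c" using wa(2) cxa symG inG xcG by blast
  moreover have "E wa xa" using wa(2) xcG refl GV by blast
  ultimately show False using wa(1) TT e ac bc xa(3) by auto
qed

lemma remaining_sub: "remaining E V n \<subseteq> V"
  by (induction n) auto

lemma sc_sub: "strict_corners E S \<subseteq> S"
  unfolding strict_corners_def by auto

theorem corollary3p25:
  fixes k :: nat
  assumes "k \<ge> 1"
  shows "\<not> realizable [1, 3, k, 1]"
proof
  assume "realizable [1, 3, k, 1]"
  then obtain V :: "nat set" and E where rg: "reflexive_graph E V"
    and rv: "rank_card_vector E V = [1, 3, k, 1]"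
    unfolding realizable_def by blast
  have "length (rank_card_vector E V) = corner_rank E V"
    unfolding rank_card_vector_def by simp
  then have cr: "corner_rank E V = 4" using rv by simp
  have ups: "rev [1..<Suc 4] = [4,3,2,1::nat]" by (simp add: upt_rec)
  have cards: "card (rank_set E V 4) = 1" "card (rank_set E V 3) = 3" "card (rank_set E V 1) = 1"
    using rv unfolding rank_card_vector_def cr ups by simp_all
  define R where "R = remaining E V"
  have R1: "R 1 = V - strict_corners E V" unfolding R_def by simp
  have R2: "R 2 = R 1 - strict_corners E (R 1)" unfolding R_def by (simp add: numeral_2_eq_2)
  have R3: "R 3 = R 2 - strict_corners E (R 2)" unfolding R_def by (simp add: numeral_3_eq_3 numeral_2_eq_2)
  have c4: "card (R 3) = 1" using cards(1) cr unfolding rank_set_def R_def by simp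
  have c3: "card (strict_corners E (R 2)) = 3" using cards(2) cr unfolding rank_set_def R_def by simp
  have c1: "card (strict_corners E V) = 1" using cards(3) cr unfolding rank_set_def R_def by simp
  obtain u where u: "strict_corners E V = {u}" using c1 unfolding One_nat_def card_1_singleton_iff by blast
  obtain z where z: "R 3 = {z}" using c4 unfolding One_nat_def card_1_singleton_iff by blast
  obtain a b c where abc: "strict_corners E (R 2) = {a,b,c}" "a \<noteq> b" "b \<noteq> c" "a \<noteq> c"
    using c3 unfolding card_3_iff by blast
  have R2eq: "R 2 = {a,b,c,z}" using z abc(1) R3 sc_sub[of E "R 2"] by auto
  have zn: "z \<noteq> a" "z \<noteq> b" "z \<noteq> c" using z abc(1) R3 by auto
  have RV: "R 2 \<subseteq> V" unfolding R_def by (rule remaining_sub)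
  have inV: "a \<in> V" "b \<in> V" "c \<in> V" "z \<in> V" using RV R2eq by auto
  have refl: "\<forall>v\<in>V. E v v" and sym: "\<forall>x\<in>V. \<forall>y\<in>V. E x y \<longrightarrow> E y x"
    using rg unfolding reflexive_graph_def by auto
  have sc4: "strict_corners E {a,b,c,z} = {a,b,c}" using abc(1) R2eq by simp
  have F: "E z a \<and> E z b \<and> E z c \<and> ((\<not>E a b \<and> \<not>E a c) \<or> (\<not>E b a \<and> \<not>E b c) \<or> (\<not>E c a \<and> \<not>E c b))"
    apply (rule four[OF abc(2) abc(4) zn(1)[symmetric] abc(3) zn(2)[symmetric] zn(3)[symmetric] _ _ _ _ _ _ _ _ _ _ sc4])
    using refl sym inV by blast+
  have G2: "R 1 = V - {u}" using R1 u by simp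
  have Tdef: "R 2 = R 1 - strict_corners E (R 1)" by (rule R2)
  show False
  proof -
    have "(\<not>E a b \<and> \<not>E a c) \<or> (\<not>E b a \<and> \<not>E b c) \<or> (\<not>E c a \<and> \<not>E c b)" using F by blast
    moreover
    { assume h: "\<not>E a b \<and> \<not>E a c"
      have "False"
        apply (rule core[OF sym refl u G2 Tdef, of b c a z])
        using R2eq F h by auto }
    moreover
    { assume h: "\<not>E b a \<and> \<not>E b c"
      have "False"
        apply (rule core[OF sym refl u G2 Tdef, of a c b z])
        using R2eq F h by auto }
    moreover
    { assume h: "\<not>E c a \<and> \<not>E c b"
      have "False"
        apply (rule core[OF sym refl u G2 Tdef, of a b c z])
        using R2eq F h by auto }
    ultimately show False by blast
  qed
qed

end
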